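(* Let $a\ge2$, $d\ge1$, $h\ge1$ and $s$ be integers with $\gcd(a,d)=1$ and $1\le s<a$. Let $\mathit{NR}$ be the set of positive integers not representable as $ax_0+\sum_{i=1}^s(ha+id)x_i$ with $x_0,\dots,x_s$ nonnegative integers, and let $S_m=\sum_{n\in\mathit{NR}}n^m$. Then for every integer $m\ge3$, \[ \begin{aligned} m(m-1)(m-2)S_{m-3}={}&m\sum_{j=0}^{m-1}\binom{m-1}{j}d^{m-j-2}B_{m-j-1}a^{j-1}\phi_j\!\left(h\lceil (a-1)/s\rceil+d\right)\\ &+\sum_{j=0}^{m}\sum_{i=0}^{j}\binom{m}{j}\binom{j}{i}a^{m-j-1}\phi_{m-j}(h)(-d)^{j-i-1}(ha+sd)^{i-1}B_{j-i}\,\phi_i\!\left(\lceil (a-1)/s\rceil\right)\\ &-m(m-1)B_{m-2}. \end{aligned} \]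
   Context: $B_m(x)$ denotes the Bernoulli polynomials, defined by $\frac{te^{tx}}{e^t-1}=\sum_{m\ge0}B_m(x)\frac{t^m}{m!}$; $B_m=B_m(0)$ are the Bernoulli numbers; $\phi_j(x)=B_j(x)-B_j$ (so $\phi_0=0$, and terms containing the factor $\phi_0$ are zero). $\lceil x\rceil$ is the least integer not less than $x$. *)

theory Defs
  imports "HOL-Analysis.Analysis" "HOL-Computational_Algebra.Formal_Power_Series"
begin

definition bernpoly :: "nat \<Rightarrow> real \<Rightarrow> real" where
  "bernpoly m x = fact m * fps_nth (fps_X * fps_exp x / (fps_exp 1 - 1)) m"

definition bernoulli :: "nat \<Rightarrow> real" where
  "bernoulli m = bernpoly m 0"

definition bphi :: "nat \<Rightarrow> real \<Rightarrow> real" where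
  "bphi j x = bernpoly j x - bernoulli j"

definition NR :: "nat \<Rightarrow> nat \<Rightarrow> nat \<Rightarrow> nat \<Rightarrow> nat set" where
  "NR a d h s = {n. 0 < n \<and> \<not> (\<exists>x0 (x :: nat \<Rightarrow> nat).
      n = a * x0 + (\<Sum>i=1..s. (h * a + i * d) * x i))}"

definition Spow :: "nat \<Rightarrow> nat \<Rightarrow> nat \<Rightarrow> nat \<Rightarrow> nat \<Rightarrow> real" where
  "Spow a d h s m = (\<Sum>n\<in>NR a d h s. real n ^ m)"

end

theory Submission
  imports Defs
begin


abbreviation E :: "real \<Rightarrow> real fps" where "E x \<equiv> fps_exp x"

definition G :: "real fps" where "G = fps_shift 1 (E 1 - 1)"
definition iG :: "real fps" where "iG = inverse G"

lemma G0: "fps_nth G 0 = 1" by (simp add: G_def)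

lemma XG: "fps_X * G = E 1 - 1"
proof -
  have "fps_shift 1 (E 1 - 1) * fps_X = E 1 - 1"
    by (rule fps_shift_times_fps_X) (auto intro!: subdegree_geI)
  thus ?thesis by (simp add: G_def mult.commute)
qed

lemma iGG: "iG * G = 1" unfolding iG_def by (rule inverse_mult_eq_1) (simp add: G0)

lemma subdeg: "subdegree (E 1 - 1) = 1"
  by (rule subdegreeI) auto

lemma shiftX: "fps_shift (Suc 0) (fps_X * f) = (f::real fps)"
  using fps_shift_times_fps_X'[of f] by (simp add: mult.commute)

lemma bernpoly_fps: "bernpoly m x = fact m * fps_nth (E x * iG) m"
proof -
  have "fps_X * E x / (E 1 - 1) = E x * iG"
    unfolding fps_divide_def fps_unit_factor_def subdeg
    by (simp add: iG_def mult.assoc shiftX G_def)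
  thus ?thesis by (simp add: bernpoly_def)
qed

lemma bernoulli_fps: "bernoulli m = fact m * fps_nth iG m"
  by (simp add: bernoulli_def bernpoly_fps)

lemma bphi_fps: "bphi m x = fact m * fps_nth ((E x - 1) * iG) m"
  by (simp add: bphi_def bernpoly_fps bernoulli_fps algebra_simps)

definition sc :: "real \<Rightarrow> real fps \<Rightarrow> real fps" where
  "sc c f = Abs_fps (\<lambda>n. c^n * fps_nth f n)"

lemma sc_nth[simp]: "fps_nth (sc c f) n = c^n * fps_nth f n"
  by (simp add: sc_def)

lemma sc_mult: "sc c (f * g) = sc c f * sc c g"
proof (rule fps_ext)
  fix n
  have "c^n * (\<Sum>i=0..n. fps_nth f i * fps_nth g (n - i))
      = (\<Sum>i=0..n. (c^i * fps_nth f i) * (c^(n-i) * fps_nth g (n - i)))"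
    unfolding sum_distrib_left
  proof (rule sum.cong)
    fix i assume "i \<in> {0..n}"
    hence "c^n = c^i * c^(n-i)" by (simp add: power_add[symmetric])
    thus "c ^ n * (fps_nth f i * fps_nth g (n - i)) = c ^ i * fps_nth f i * (c ^ (n - i) * fps_nth g (n - i))"
      by simp
  qed simp
  thus "fps_nth (sc c (f * g)) n = fps_nth (sc c f * sc c g) n"
    by (simp add: fps_mult_nth)
qed

lemma sc_diff: "sc c (f - g) = sc c f - sc c g"
  by (rule fps_ext) (simp add: algebra_simps)

lemma sc_one: "sc c 1 = 1"
  by (rule fps_ext) simp

lemma sc_X: "sc c fps_X = fps_const c * fps_X"
  by (rule fps_ext) (auto simp: le_Suc_eq)

lemma sc_E: "sc c (E x) = E (c * x)"
  by (rule fps_ext) (simp add: power_mult_distrib)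

definition Q :: "real \<Rightarrow> real fps" where "Q c = sc c iG"

lemma iG_rel: "iG * (E 1 - 1) = fps_X"
  using iGG XG by (metis mult.assoc mult.commute mult_1)

lemma Q_rel: "Q c * (E c - 1) = fps_const c * fps_X"
proof -
  have "sc c (iG * (E 1 - 1)) = sc c fps_X" by (simp add: iG_rel)
  thus ?thesis by (simp add: sc_mult sc_diff sc_one sc_E sc_X Q_def)
qed

lemma Q_nth: "fps_nth (Q c) n = c^n * fps_nth iG n"
  by (simp add: Q_def)

lemma Qphi_nth: "fps_nth ((E (c*x) - 1) * Q c) n = c^n * fps_nth ((E x - 1) * iG) n"
proof -
  have "(E (c*x) - 1) * Q c = sc c ((E x - 1) * iG)"
    by (simp add: sc_mult sc_diff sc_one sc_E Q_def)
  thus ?thesis by simp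
qed

lemma conv: "fact n * fps_nth (f * g) n =
   (\<Sum>j=0..n. real (n choose j) * (fact j * fps_nth f j) * (fact (n-j) * fps_nth g (n-j)))"
  unfolding fps_mult_nth sum_distrib_left
proof (rule sum.cong)
  fix j assume "j \<in> {0..n}"
  hence "real (n choose j) = fact n / (fact j * fact (n-j))" by (simp add: binomial_fact)
  thus "fact n * (fps_nth f j * fps_nth g (n - j)) = real (n choose j) * (fact j * fps_nth f j) * (fact (n - j) * fps_nth g (n - j))"
    by simp
qed simp



definition Rep :: "nat \<Rightarrow> nat \<Rightarrow> nat \<Rightarrow> nat \<Rightarrow> nat \<Rightarrow> bool" where
  "Rep a d h s n = (\<exists>x0 (x :: nat \<Rightarrow> nat). n = a * x0 + (\<Sum>i=1..s. (h * a + i * d) * x i))"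

definition wt :: "nat \<Rightarrow> nat \<Rightarrow> nat \<Rightarrow> nat \<Rightarrow> nat \<Rightarrow> nat" where
  "wt a d h s t = ((t + s - 1) div s) * h * a + t * d"

lemma cl_bounds:
  fixes s t :: nat assumes "s \<ge> 1" "t \<ge> 1"
  shows "((t + s - 1) div s - 1) * s < t" "t \<le> ((t + s - 1) div s) * s" "(t + s - 1) div s \<ge> 1"
proof -
  define q where "q = (t + s - 1) div s"
  have e: "q * s + (t + s - 1) mod s = t + s - 1" by (simp add: q_def)
  have m: "(t + s - 1) mod s < s" using assms by simp
  show "t \<le> ((t + s - 1) div s) * s" using e m unfolding q_def[symmetric] by linarith
  show "(q - 1) * s < t" unfolding q_def[symmetric] using e assms
    by (simp add: diff_mult_distrib)
  have "s div s \<le> (t + s - 1) div s" using assms by (intro div_le_mono) simp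
  thus "(t + s - 1) div s \<ge> 1" using assms by simp
qed

lemma sum_two_delta:
  fixes f :: "nat \<Rightarrow> nat"
  assumes "s \<in> A" "r \<in> A" "finite A"
  shows "(\<Sum>i\<in>A. f i * ((if i = s then p else 0) + (if i = r then 1 else 0))) = f s * p + f r"
proof -
  have "(\<Sum>i\<in>A. f i * ((if i = s then p else 0) + (if i = r then 1 else 0)))
      = (\<Sum>i\<in>A. (if i = s then f i * p else 0)) + (\<Sum>i\<in>A. (if i = r then f i else 0))"
    by (subst sum.distrib[symmetric], rule sum.cong) auto
  also have "\<dots> = f s * p + f r" using assms by (simp add: sum.delta')
  finally show ?thesis .
qed

lemma Rep_wt:
  assumes "s \<ge> 1"
  shows "Rep a d h s (wt a d h s t + k * a)"
proof (cases "t = 0")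
  case True
  hence "wt a d h s t + k * a = a * k + (\<Sum>i=1..s. (h * a + i * d) * (\<lambda>_. 0) i)"
    using assms by (simp add: wt_def)
  thus ?thesis unfolding Rep_def by (intro exI[of _ k] exI[of _ "\<lambda>_. 0"])
next
  case False
  define q where "q = (t + s - 1) div s"
  define r where "r = t - (q - 1) * s"
  have b1: "(q - 1) * s < t" and b2: "t \<le> q * s" and b3: "q \<ge> 1"
    using cl_bounds[OF assms, of t] False unfolding q_def by auto
  have r1: "1 \<le> r" "r \<le> s" using b1 b2 b3 unfolding r_def
    by (auto simp: diff_mult_distrib)
  define x where "x = (\<lambda>i::nat. (if i = s then q - 1 else 0) + (if i = r then 1 else (0::nat)))"
  have "(\<Sum>i=1..s. (h * a + i * d) * x i) = (h * a + s * d) * (q - 1) + (h * a + r * d)"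
    unfolding x_def using r1 assms by (intro sum_two_delta) auto
  moreover have "wt a d h s t + k * a = a * k + ((h * a + s * d) * (q - 1) + (h * a + r * d))"
  proof -
    have t: "t = (q - 1) * s + r" using b1 unfolding r_def by simp
    have "q = (q - 1) + 1" using b3 by simp
    then obtain p where p: "q = p + 1" by blast
    have w: "wt a d h s t = q * h * a + t * d" by (simp add: wt_def q_def)
    have t2: "t = p * s + r" using t p by simp
    show ?thesis by (simp only: w) (simp add: t2 p algebra_simps)
  qed
  ultimately show ?thesis unfolding Rep_def by metis
qed

lemma Rep_imp:
  assumes "s \<ge> 1" "a \<ge> 1" "Rep a d h s n"
  shows "\<exists>t<a. \<exists>k. n = wt a d h s t + k * a"
proof -
  obtain x0 x where n: "n = a * x0 + (\<Sum>i=1..s. (h * a + i * d) * x i)"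
    using assms(3) unfolding Rep_def by blast
  define K where "K = (\<Sum>i=1..s. x i)"
  define T where "T = (\<Sum>i=1..s. i * x i)"
  have sumeq: "(\<Sum>i=1..s. (h * a + i * d) * x i) = h * a * K + d * T"
    unfolding K_def T_def by (simp add: sum.distrib sum_distrib_left algebra_simps)
  have TK: "T \<le> s * K" unfolding T_def K_def sum_distrib_left
    by (intro sum_mono) simp
  define t where "t = T mod a"
  define l where "l = T div a"
  define q where "q = (t + s - 1) div s"
  have ta: "t < a" using assms unfolding t_def by simp
  have tT: "t \<le> T" unfolding t_def by simp
  have "q \<le> (s * K + (s - 1)) div s" unfolding q_def using tT TK assms
    by (intro div_le_mono) simp
  also have "\<dots> = K" using assms
  proof -
    have "(s * K + (s - 1)) div s = (s - 1 + K * s) div s" by (simp add: algebra_simps)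
    also have "\<dots> = (s - 1) div s + K" using assms(1) by (simp only: div_mult_self1)
    finally show ?thesis using assms(1) by simp
  qed
  finally have qK: "q \<le> K" .
  have Tdec: "T = l * a + t" unfolding l_def t_def by simp
  obtain K' where K': "K = q + K'" using qK le_Suc_ex by blast
  have "n = wt a d h s t + (x0 + h * K' + l * d) * a"
    unfolding n sumeq wt_def q_def[symmetric] Tdec K' by (simp add: algebra_simps)
  thus ?thesis using ta by blast
qed

lemma mod_cancel_aux:
  fixes a d t t' :: nat
  assumes "t' \<le> t" "t < a" "coprime a d" "t * d mod a = t' * d mod a"
  shows "t = t'"
proof -
  have "a dvd t * d - t' * d" using assms(1,4) by (simp add: mod_eq_dvd_iff_nat)
  hence "a dvd (t - t') * d" by (simp add: diff_mult_distrib)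
  hence "a dvd t - t'" using assms(3) by (simp add: coprime_dvd_mult_left_iff)
  moreover have "t - t' < a" using assms by simp
  ultimately have "t - t' = 0" using dvd_imp_le by fastforce
  thus ?thesis using assms(1) by simp
qed

lemma mod_cancel:
  fixes a d t t' :: nat
  assumes "t < a" "t' < a" "coprime a d" "t * d mod a = t' * d mod a"
  shows "t = t'"
  using mod_cancel_aux[of t' t a d] mod_cancel_aux[of t t' a d] assms
  by (cases "t' \<le> t") auto

lemma wt_mod: "wt a d h s t mod a = t * d mod a"
  unfolding wt_def by simp

lemma wt_inj:
  assumes "a \<ge> 1" "coprime a d" "t < a" "t' < a" "wt a d h s t = wt a d h s t' + k * a"
  shows "t = t' \<and> k = 0"
proof -
  have "wt a d h s t mod a = wt a d h s t' mod a" using assms(5) by simp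
  hence "t * d mod a = t' * d mod a" by (simp add: wt_mod)
  hence tt: "t = t'" using mod_cancel assms by blast
  thus ?thesis using assms by simp
qed

lemma res_surj:
  fixes a d n :: nat
  assumes "a \<ge> 1" "coprime a d"
  shows "\<exists>t<a. t * d mod a = n mod a"
proof -
  let ?f = "\<lambda>t. t * d mod a"
  have "inj_on ?f {..<a}"
  proof (rule inj_onI)
    fix x y assume "x \<in> {..<a}" "y \<in> {..<a}" "x * d mod a = y * d mod a"
    thus "x = y" using mod_cancel[OF _ _ assms(2), of x y] by simp
  qed
  moreover have "?f ` {..<a} \<subseteq> {..<a}" using assms by auto
  ultimately have eq: "?f ` {..<a} = {..<a}" by (intro endo_inj_surj) auto
  have "n mod a \<in> {..<a}" using assms by simp
  hence "n mod a \<in> ?f ` {..<a}" by (simp only: eq)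
  then obtain t where "t \<in> {..<a}" "n mod a = t * d mod a" by (rule imageE)
  thus ?thesis by auto
qed

lemma Rep_iff:
  assumes "s \<ge> 1" "a \<ge> 1"
  shows "Rep a d h s n \<longleftrightarrow> (\<exists>t<a. \<exists>k. n = wt a d h s t + k * a)"
  using Rep_imp[OF assms] Rep_wt[OF assms(1)] by blast

lemma notRep_lt:
  assumes "s \<ge> 1" "a \<ge> 1" "coprime a d" "\<not> Rep a d h s n"
  shows "n < (a + s) * h * a + a * d"
proof -
  obtain t where t: "t < a" "t * d mod a = n mod a" using res_surj assms by blast
  have "n < wt a d h s t"
  proof (rule ccontr)
    assume "\<not> n < wt a d h s t"
    hence le: "wt a d h s t \<le> n" by simp
    have "wt a d h s t mod a = n mod a" using t by (simp add: wt_mod)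
    hence "a dvd n - wt a d h s t" using le mod_eq_dvd_iff_nat[OF le, of a] by simp
    then obtain k where "n - wt a d h s t = a * k" by blast
    hence "n = wt a d h s t + a * k" using le by linarith
    hence "n = wt a d h s t + k * a" by (simp add: mult.commute)
    thus False using Rep_wt[OF assms(1), of a d h t k] assms(4) by simp
  qed
  also have "wt a d h s t \<le> (a + s) * h * a + a * d"
  proof -
    have "(t + s - 1) div s \<le> t + s - 1" by simp
    also have "\<dots> \<le> a + s" using t by simp
    finally have "(t + s - 1) div s * h * a \<le> (a + s) * h * a" by (intro mult_right_mono) auto
    moreover have "t * d \<le> a * d" using t by simp
    ultimately show ?thesis unfolding wt_def by (rule add_mono)
  qed
  finally show ?thesis .
qed

lemma NR_eq: "NR a d h s = {n. \<not> Rep a d h s n}"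
proof -
  have "Rep a d h s 0" unfolding Rep_def by (intro exI[of _ 0] exI[of _ "\<lambda>_. 0"]) simp
  thus ?thesis unfolding NR_def Rep_def[symmetric] by (auto intro!: Nat.gr0I)
qed

lemma NR_finite:
  assumes "s \<ge> 1" "a \<ge> 1" "coprime a d"
  shows "finite {n. \<not> Rep a d h s n}"
  by (rule finite_subset[of _ "{..< (a + s) * h * a + a * d}"]) (use notRep_lt[OF assms] in auto)

lemma key_sum:
  fixes g :: "nat \<Rightarrow> 'b::comm_monoid_add"
  assumes "s \<ge> 1" "a \<ge> 1" "coprime a d"
  shows "(\<Sum>n\<in>{n. \<not> Rep a d h s n}. g (n + a)) + (\<Sum>r<a. g r)
       = (\<Sum>n\<in>{n. \<not> Rep a d h s n}. g n) + (\<Sum>t<a. g (wt a d h s t))"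
proof -
  let ?N = "{n. \<not> Rep a d h s n}"
  have fin: "finite ?N" using NR_finite[OF assms] .
  have injw: "inj_on (wt a d h s) {..<a}"
    unfolding inj_on_def using wt_inj[OF assms(2,3), of _ _ h s 0] by auto
  have seteq: "(\<lambda>n. n + a) ` ?N \<union> {..<a} = ?N \<union> wt a d h s ` {..<a}"
  proof (intro equalityI subsetI)
    fix n assume "n \<in> (\<lambda>n. n + a) ` ?N \<union> {..<a}"
    then consider (A) m where "n = m + a" "\<not> Rep a d h s m" | (B) "n < a" by auto
    thus "n \<in> ?N \<union> wt a d h s ` {..<a}"
    proof cases
      case A
      show ?thesis
      proof (cases "Rep a d h s n")
        case True
        then obtain t k where tk: "t < a" "n = wt a d h s t + k * a" using Rep_imp assms by blast
        show ?thesis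
        proof (cases k)
          case 0 thus ?thesis using tk by auto
        next
          case (Suc k')
          hence "m = wt a d h s t + k' * a" using tk A by simp
          thus ?thesis using A Rep_wt[OF assms(1), of a d h t k'] by simp
        qed
      qed simp
    next
      case B
      show ?thesis
      proof (cases "Rep a d h s n")
        case True
        then obtain t k where tk: "t < a" "n = wt a d h s t + k * a" using Rep_imp assms by blast
        hence ka: "k * a < a" using B by linarith
        have "k = 0"
        proof (rule ccontr)
          assume "k \<noteq> 0"
          hence "1 * a \<le> k * a" by (intro mult_right_mono) auto
          thus False using ka by simp
        qed
        thus ?thesis using tk by auto
      qed simp
    qed
  next
    fix n assume "n \<in> ?N \<union> wt a d h s ` {..<a}"
    then consider (A) "\<not> Rep a d h s n" | (B) t where "t < a" "n = wt a d h s t" by auto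
    thus "n \<in> (\<lambda>n. n + a) ` ?N \<union> {..<a}"
    proof cases
      case A
      show ?thesis
      proof (cases "n < a")
        case False
        have "\<not> Rep a d h s (n - a)"
        proof
          assume "Rep a d h s (n - a)"
          then obtain t k where tk: "t < a" "n - a = wt a d h s t + k * a" using Rep_imp assms by blast
          hence "n = wt a d h s t + (k + 1) * a" using False by simp
          thus False using A Rep_wt[OF assms(1), of a d h t "k+1"] by simp
        qed
        moreover have "n = (n - a) + a" using False by simp
        ultimately show ?thesis by blast
      qed simp
    next
      case B
      show ?thesis
      proof (cases "n < a")
        case False
        have "\<not> Rep a d h s (n - a)"
        proof
          assume "Rep a d h s (n - a)"
          then obtain t' k where tk: "t' < a" "n - a = wt a d h s t' + k * a" using Rep_imp assms by blast
          hence "wt a d h s t = wt a d h s t' + (k + 1) * a" using False B by simp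
          thus False using wt_inj[OF assms(2,3) B(1) tk(1), of h s "k+1"] by simp
        qed
        moreover have "n = (n - a) + a" using False by simp
        ultimately show ?thesis by blast
      qed simp
    qed
  qed
  have d1: "(\<lambda>n. n + a) ` ?N \<inter> {..<a} = {}" by auto
  have d2: "?N \<inter> wt a d h s ` {..<a} = {}"
  proof -
    have "Rep a d h s (wt a d h s t)" for t using Rep_wt[OF assms(1), of a d h t 0] by simp
    thus ?thesis by blast
  qed
  have "(\<Sum>n\<in>?N. g (n + a)) + (\<Sum>r<a. g r) = sum g ((\<lambda>n. n + a) ` ?N \<union> {..<a})"
    using fin d1 by (simp add: sum.union_disjoint sum.reindex)
  also have "\<dots> = sum g (?N \<union> wt a d h s ` {..<a})" by (simp only: seteq)
  also have "\<dots> = (\<Sum>n\<in>?N. g n) + (\<Sum>t<a. g (wt a d h s t))"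
    using fin d2 injw by (simp add: sum.union_disjoint sum.reindex)
  finally show ?thesis .
qed



lemma cl_step:
  fixes n s :: nat assumes "s \<ge> 1"
  shows "(n + s) div s = (n + s - 1) div s \<or>
         ((n + s) div s = (n + s - 1) div s + 1 \<and> n = s * ((n + s - 1) div s))"
proof (cases "n mod s = 0")
  case True
  then obtain k where k: "n = s * k" by blast
  have "(n + s) div s = k + 1" using assms unfolding k
    by (metis add.commute add_cancel_left_right div_mult_self2 mult.commute nonzero_mult_div_cancel_left not_one_le_zero div_self add_mult_distrib2 mult_1_right)
  moreover have "(n + s - 1) div s = k"
  proof -
    obtain s' where s': "s = Suc s'" using assms by (cases s) auto
    have "n + s - 1 = s' + k * s" using k s' by simp
    moreover have "(s' + k * s) div s = s' div s + k" using s' by (simp only: div_mult_self1)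
    moreover have "s' div s = 0" using s' by simp
    ultimately show ?thesis by simp
  qed
  ultimately show ?thesis using k by simp
next
  case False
  define k where "k = n div s"
  define r where "r = n mod s"
  have nr: "n = k * s + r" unfolding k_def r_def by simp
  have r: "1 \<le> r" "r < s" using False assms unfolding r_def by auto
  have eq1: "n + s = (r + s) + k * s" using nr by simp
  have "(n + s) div s = ((r + s) + k * s) div s" by (simp only: eq1)
  also have "\<dots> = k + (r + s) div s" using assms by (intro div_mult_self1) simp
  also have "(r + s) div s = 1" using r by (simp add: div_add_self2 div_less)
  finally have e1: "(n + s) div s = k + 1" by simp
  have eq2: "n + s - 1 = (r + s - 1) + k * s" using nr r by simp
  have "(n + s - 1) div s = ((r + s - 1) + k * s) div s" by (simp only: eq2)
  also have "\<dots> = k + (r + s - 1) div s" using assms by (intro div_mult_self1) simp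
  also have "(r + s - 1) div s = 1"
  proof -
    have eq3: "r + s - 1 = (r - 1) + 1 * s" using r by simp
    have "(r + s - 1) div s = ((r - 1) + 1 * s) div s" by (simp only: eq3)
    also have "\<dots> = 1 + (r - 1) div s" using assms by (intro div_mult_self1) simp
    finally have "(r + s - 1) div s = 1 + (r - 1) div s" .
    thus ?thesis using r by simp
  qed
  finally have e2: "(n + s - 1) div s = k + 1" by simp
  show ?thesis using e1 e2 by simp
qed

lemma Wpoly:
  fixes u v :: "'a::comm_ring_1" and s n :: nat
  assumes "s \<ge> 1"
  shows "(u - 1) * (v * u^s - 1) * (\<Sum>t<Suc n. v^((t + s - 1) div s) * u^t)
       = (v^((n + s - 1) div s) * u^(Suc n) - 1) * (v * u^s - 1)
         - u * (v - 1) * (v^((n + s - 1) div s) * u^(s * ((n + s - 1) div s)) - 1)"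
proof (induction n)
  case 0
  have "(s - 1) div s = 0" using assms by simp
  thus ?case using assms by simp
next
  case (Suc n)
  define c where "c = (n + s - 1) div s"
  have step: "(\<Sum>t<Suc (Suc n). v^((t + s - 1) div s) * u^t)
      = (\<Sum>t<Suc n. v^((t + s - 1) div s) * u^t) + v^((n + s) div s) * u^(Suc n)"
    using assms by simp
  have e: "Suc n + s - 1 = n + s" by simp
  from cl_step[OF assms, of n]
  show ?case
  proof
    assume h: "(n + s) div s = (n + s - 1) div s"
    show ?case unfolding step e h distrib_left Suc.IH c_def[symmetric]
      by (simp add: algebra_simps)
  next
    assume h: "(n + s) div s = (n + s - 1) div s + 1 \<and> n = s * ((n + s - 1) div s)"
    hence h1: "(n + s) div s = c + 1" and h2: "n = s * c" unfolding c_def by auto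
    define V where "V = v^c"
    define U where "U = u^(s*c)"
    define S where "S = u^s"
    have p1: "v^(c+1) = V * v" unfolding V_def by simp
    have p2: "u^(Suc n) = U * u" unfolding U_def h2 by simp
    have p3: "u^(Suc (Suc n)) = U * u * u" unfolding U_def h2 by simp
    have p4: "u^(s * c + s * 1) = U * S" unfolding U_def S_def by (simp add: power_add)
    show ?case unfolding step e h1 distrib_left Suc.IH c_def[symmetric] p1 p2 p3 p4
      unfolding V_def[symmetric] U_def[symmetric] S_def[symmetric]
      by (simp add: algebra_simps)
  qed
qed



lemma alg:
  fixes X N W R Qa Qd QL Qm iG Ea E1 u v Ey EL ELc Emd :: "'a::idom"
  assumes e1: "(Ea - 1) * N = W - R"
    and e2: "R * (E1 - 1) = Ea - 1"
    and e3: "(u - 1) * (EL - 1) * W = (Ey - 1) * (EL - 1) - u * (v - 1) * (ELc - 1)"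
    and qa: "Qa * (Ea - 1) = X" and qd: "Qd * (u - 1) = X" and qL: "QL * (EL - 1) = X"
    and q1: "iG * (E1 - 1) = X" and qm: "Qm * (Emd - 1) = X" and em: "Emd * u = 1"
    and nz: "Ea \<noteq> 1" "u \<noteq> 1" "EL \<noteq> 1" "E1 \<noteq> 1"
  shows "X^3 * N = X * (((Ey - 1) * Qa) * Qd) + (((ELc - 1) * QL) * Qm) * ((v - 1) * Qa) - X^2 * iG"
proof -
  define M where "M = (Ea - 1) * (u - 1) * (EL - 1) * (E1 - 1)"
  have Mnz: "M \<noteq> 0" using nz unfolding M_def by auto
  have qm': "Qm * (u - 1) = - (u * X)"
  proof -
    have "u - 1 = - (u * (Emd - 1))" using em by (simp add: algebra_simps)
    hence "Qm * (u - 1) = - (u * (Qm * (Emd - 1)))" by (simp add: algebra_simps)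
    thus ?thesis using qm by simp
  qed
  have L: "M * (X^3 * N) = X^3 * (E1 - 1) * ((u - 1) * (EL - 1) * W) - X^3 * (u - 1) * (EL - 1) * (R * (E1 - 1))"
  proof -
    have "M * (X^3 * N) = X^3 * (u - 1) * (EL - 1) * (E1 - 1) * ((Ea - 1) * N)"
      unfolding M_def by (simp add: ac_simps)
    also have "\<dots> = X^3 * (E1 - 1) * ((u - 1) * (EL - 1) * W) - X^3 * (u - 1) * (EL - 1) * (R * (E1 - 1))"
      unfolding e1 by (simp add: algebra_simps)
    finally show ?thesis .
  qed
  have T1: "M * (X * (((Ey - 1) * Qa) * Qd)) = X * (Ey - 1) * (Qa * (Ea - 1)) * (Qd * (u - 1)) * (EL - 1) * (E1 - 1)"
    unfolding M_def by (simp add: ac_simps)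
  have T2: "M * ((((ELc - 1) * QL) * Qm) * ((v - 1) * Qa)) = (ELc - 1) * (QL * (EL - 1)) * (Qm * (u - 1)) * (v - 1) * (Qa * (Ea - 1)) * (E1 - 1)"
    unfolding M_def by (simp add: ac_simps)
  have T3: "M * (X^2 * iG) = X^2 * (iG * (E1 - 1)) * (Ea - 1) * (u - 1) * (EL - 1)"
    unfolding M_def by (simp add: ac_simps)
  have split: "M * (X * (((Ey - 1) * Qa) * Qd) + (((ELc - 1) * QL) * Qm) * ((v - 1) * Qa) - X^2 * iG)
     = M * (X * (((Ey - 1) * Qa) * Qd)) + M * ((((ELc - 1) * QL) * Qm) * ((v - 1) * Qa)) - M * (X^2 * iG)"
    by (simp add: algebra_simps)
  have "M * (X^3 * N) = M * (X * (((Ey - 1) * Qa) * Qd) + (((ELc - 1) * QL) * Qm) * ((v - 1) * Qa) - X^2 * iG)"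
    unfolding split T1 T2 T3 L e3 e2 qa qd qL q1 qm'
    by (simp add: algebra_simps power3_eq_cube power2_eq_square)
  thus ?thesis using Mnz by simp
qed



definition Qn :: "real \<Rightarrow> real fps" where "Qn c = fps_const (1 / c) * Q c"

lemma Qn_rel: "c \<noteq> 0 \<Longrightarrow> Qn c * (E c - 1) = fps_X"
  unfolding Qn_def mult.assoc Q_rel by (simp add: mult.assoc[symmetric])

lemma E_ne1: "c \<noteq> 0 \<Longrightarrow> E c \<noteq> 1"
proof
  assume "c \<noteq> 0" "E c = 1"
  hence "fps_nth (E c) 1 = fps_nth 1 1" by simp
  thus False using \<open>c \<noteq> 0\<close> by simp
qed

lemma E_geom: "(\<Sum>r<n. E (real r)) * (E 1 - 1) = E (real n) - 1"
proof (induction n)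
  case 0 thus ?case by simp
next
  case (Suc n)
  have "(\<Sum>r<Suc n. E (real r)) * (E 1 - 1) = (E (real n) - 1) + E (real n) * (E 1 - 1)"
    using Suc by (simp add: algebra_simps)
  also have "\<dots> = E (real n) * E 1 - 1" by (simp add: algebra_simps)
  also have "\<dots> = E (real (Suc n)) - 1" by (simp add: fps_exp_add_mult[symmetric])
  finally show ?case .
qed

lemma E_nat_pow: "E (real k * x) = (E x) ^ k"
  by (simp add: fps_exp_power_mult)

lemma fps_main:
  fixes a d h s :: nat
  assumes "a \<ge> 2" "d \<ge> 1" "h \<ge> 1" "coprime a d" "1 \<le> s" "s < a"
  defines "c \<equiv> (a - 1 + s - 1) div s"
  defines "y \<equiv> real h * real c + real d"
  defines "L \<equiv> real h * real a + real s * real d"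
  defines "N \<equiv> (\<Sum>n\<in>NR a d h s. E (real n))"
  shows "fps_X^3 * N = fps_X * (((E (real a * y) - 1) * Qn (real a)) * Qn (real d))
     + (((E (L * real c) - 1) * Qn L) * Qn (- real d)) * ((E (real a * real h) - 1) * Qn (real a))
     - fps_X^2 * iG"
proof -
  define u where "u = E (real d)"
  define v where "v = E (real a * real h)"
  define W where "W = (\<Sum>t<a. E (real (wt a d h s t)))"
  define R where "R = (\<Sum>r<a. E (real r))"
  have a1: "a \<ge> 1" using assms by simp
  have e1: "(E (real a) - 1) * N = W - R"
  proof -
    have "(\<Sum>n\<in>{n. \<not> Rep a d h s n}. E (real (n + a))) + R
       = (\<Sum>n\<in>{n. \<not> Rep a d h s n}. E (real n)) + W"
      unfolding R_def W_def by (rule key_sum[OF assms(5) a1 assms(4)])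
    hence "E (real a) * N + R = N + W"
      unfolding N_def NR_eq by (simp add: fps_exp_add_mult sum_distrib_left mult.commute)
    thus ?thesis by (simp add: algebra_simps)
  qed
  have e2: "R * (E 1 - 1) = E (real a) - 1" unfolding R_def by (rule E_geom)
  have Wsum: "W = (\<Sum>t<Suc (a - 1). v^((t + s - 1) div s) * u^t)"
  proof -
    have "Suc (a - 1) = a" using a1 by simp
    moreover have "E (real (wt a d h s t)) = v^((t + s - 1) div s) * u^t" for t
    proof -
      have "real (wt a d h s t) = real ((t + s - 1) div s) * (real a * real h) + real t * real d"
        unfolding wt_def by (simp add: algebra_simps)
      thus ?thesis unfolding u_def v_def by (simp add: fps_exp_add_mult E_nat_pow)
    qed
    ultimately show ?thesis unfolding W_def by simp
  qed
  have cdef: "(a - 1 + s - 1) div s = c" unfolding c_def ..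
  have EL: "E L = v * u^s"
    unfolding u_def v_def L_def by (simp add: fps_exp_add_mult[symmetric] E_nat_pow[symmetric] algebra_simps)
  have Ey: "E (real a * y) = v^c * u^a"
    unfolding u_def v_def y_def by (simp add: fps_exp_add_mult[symmetric] E_nat_pow[symmetric] algebra_simps)
  have ELc: "E (L * real c) = v^c * u^(s * c)"
    unfolding u_def v_def L_def by (simp add: fps_exp_add_mult[symmetric] E_nat_pow[symmetric] algebra_simps)
  have e3: "(u - 1) * (E L - 1) * W = (E (real a * y) - 1) * (E L - 1) - u * (v - 1) * (E (L * real c) - 1)"
    using Wpoly[OF assms(5), of u v "a - 1"] a1 unfolding Wsum EL Ey ELc cdef by simp
  have Lpos: "L \<noteq> 0"
  proof -
    have "real h * real a > 0" using assms by simp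
    moreover have "real s * real d \<ge> 0" by simp
    ultimately show ?thesis unfolding L_def by linarith
  qed
  have em: "E (- real d) * u = 1" unfolding u_def by (simp add: fps_exp_add_mult[symmetric])
  show ?thesis unfolding v_def[symmetric]
  proof (rule alg[OF e1 e2 e3])
    show "Qn (real a) * (E (real a) - 1) = fps_X" using assms by (intro Qn_rel) simp
    show "Qn (real d) * (u - 1) = fps_X" unfolding u_def using assms by (intro Qn_rel) simp
    show "Qn L * (E L - 1) = fps_X" using Lpos by (intro Qn_rel)
    show "iG * (E 1 - 1) = fps_X" by (rule iG_rel)
    show "Qn (- real d) * (E (- real d) - 1) = fps_X" using assms by (intro Qn_rel) simp
    show "E (- real d) * u = 1" by (rule em)
    show "E (real a) \<noteq> 1" "u \<noteq> 1" "E L \<noteq> 1" "E 1 \<noteq> 1"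
      unfolding u_def using assms Lpos by (auto intro!: E_ne1)
  qed
qed



lemma powi_m1: "(x::real) \<noteq> 0 \<Longrightarrow> x powi (int k - 1) = x^k / x"
  by (simp add: power_int_diff)

lemma Fphi: "c \<noteq> 0 \<Longrightarrow> fact j * fps_nth ((E (c * x) - 1) * Qn c) j = c powi (int j - 1) * bphi j x"
proof -
  assume c: "c \<noteq> 0"
  have "(E (c * x) - 1) * Qn c = fps_const (1 / c) * ((E (c * x) - 1) * Q c)"
    unfolding Qn_def by (simp add: ac_simps)
  hence "fps_nth ((E (c * x) - 1) * Qn c) j = fps_nth (fps_const (1 / c) * ((E (c * x) - 1) * Q c)) j"
    by (simp only:)
  also have "\<dots> = (1 / c) * (c^j * fps_nth ((E x - 1) * iG) j)"
    by (simp only: fps_mult_left_const_nth Qphi_nth)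
  finally have "fps_nth ((E (c * x) - 1) * Qn c) j = (1 / c) * (c^j * fps_nth ((E x - 1) * iG) j)" .
  thus ?thesis using c by (simp add: powi_m1 bphi_fps)
qed

lemma FB: "c \<noteq> 0 \<Longrightarrow> fact k * fps_nth (Qn c) k = c powi (int k - 1) * bernoulli k"
  using powi_m1[of c k] by (simp add: Qn_def Q_nth bernoulli_fps)

lemma ceil_div:
  fixes n s :: nat assumes "s \<ge> 1"
  shows "\<lceil>real n / real s\<rceil> = int ((n + s - 1) div s)"
proof (rule ceiling_unique)
  define q where "q = (n + s - 1) div s"
  define r where "r = (n + s - 1) mod s"
  have e: "q * s + r = n + s - 1" unfolding q_def r_def by simp
  have r: "r < s" unfolding r_def using assms by simp
  have s0: "real s > 0" using assms by simp
  have "n \<le> q * s" using e r by linarith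
  hence "real n \<le> real q * real s" by (metis of_nat_le_iff of_nat_mult)
  thus "real n / real s \<le> real_of_int (int q)" using s0 by (simp add: divide_le_eq)
  have "q * s < n + s" using e assms by linarith
  hence "real q * real s < real n + real s" by (metis of_nat_less_iff of_nat_mult of_nat_add)
  hence "real q - 1 < real n / real s" using s0 by (simp add: field_simps)
  thus "real_of_int (int q) - 1 < real n / real s" by simp
qed



lemma fact3: "m \<ge> 3 \<Longrightarrow> (fact m :: real) = real m * (real m - 1) * (real m - 2) * fact (m - 3)"
proof -
  assume "m \<ge> 3"
  then obtain k where k: "m = k + 3" by (metis add.commute le_Suc_ex)
  show ?thesis unfolding k by (simp add: fact_Suc numeral_eq_Suc algebra_simps)
qed

lemma c_lhs:
  assumes "m \<ge> 3"
  shows "fact m * fps_nth (fps_X^3 * (\<Sum>n\<in>NR a d h s. E (real n))) m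
       = real m * (real m - 1) * (real m - 2) * Spow a d h s (m - 3)"
proof -
  have "fps_nth (fps_X^3 * (\<Sum>n\<in>NR a d h s. E (real n))) m = (\<Sum>n\<in>NR a d h s. real n ^ (m - 3)) / fact (m - 3)"
    using assms by (simp add: fps_X_power_mult_nth fps_sum_nth sum_divide_distrib)
  thus ?thesis using assms by (simp add: fact3 Spow_def)
qed

lemma c_t3:
  assumes "m \<ge> 2"
  shows "fact m * fps_nth (fps_X^2 * iG) m = real m * (real m - 1) * bernoulli (m - 2)"
proof -
  obtain k where k: "m = k + 2" using assms by (metis add.commute le_Suc_ex)
  have "fps_nth (fps_X^2 * iG) m = fps_nth iG k" unfolding k by (subst fps_X_power_mult_nth) simp
  thus ?thesis unfolding k by (simp add: bernoulli_fps fact_Suc numeral_eq_Suc algebra_simps)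
qed

lemma c_t1:
  assumes "m \<ge> 1" "ra \<noteq> 0" "rd \<noteq> 0"
  shows "fact m * fps_nth (fps_X * (((E (ra * y) - 1) * Qn ra) * Qn rd)) m
    = real m * (\<Sum>j=0..m-1. real (m - 1 choose j) * (rd powi (int m - int j - 2))
          * bernoulli (m - j - 1) * (ra powi (int j - 1)) * bphi j y)"
proof -
  obtain k where k: "m = Suc k" using assms by (cases m) auto
  have "fact m * fps_nth (fps_X * (((E (ra * y) - 1) * Qn ra) * Qn rd)) m
      = real m * (fact k * fps_nth (((E (ra * y) - 1) * Qn ra) * Qn rd) k)"
    unfolding k by (simp add: fact_Suc)
  also have "fact k * fps_nth (((E (ra * y) - 1) * Qn ra) * Qn rd) k
      = (\<Sum>j=0..k. real (k choose j) * (fact j * fps_nth ((E (ra * y) - 1) * Qn ra) j) * (fact (k - j) * fps_nth (Qn rd) (k - j)))"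
    by (rule conv)
  also have "\<dots> = (\<Sum>j=0..m-1. real (m - 1 choose j) * (rd powi (int m - int j - 2))
          * bernoulli (m - j - 1) * (ra powi (int j - 1)) * bphi j y)"
  proof (rule sum.cong)
    fix j assume j: "j \<in> {0..m-1}"
    have ii: "int m - int j - 2 = int (k - j) - 1" using j k by auto
    have kk: "m - j - 1 = k - j" using k by simp
    show "real (k choose j) * (fact j * fps_nth ((E (ra * y) - 1) * Qn ra) j) * (fact (k - j) * fps_nth (Qn rd) (k - j))
        = real (m - 1 choose j) * (rd powi (int m - int j - 2)) * bernoulli (m - j - 1) * (ra powi (int j - 1)) * bphi j y"
      unfolding Fphi[OF assms(2)] FB[OF assms(3)] ii kk by (simp add: k)
  qed (simp add: k)
  finally show ?thesis .
qed

lemma c_t2: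
  assumes "ra \<noteq> 0" "rd \<noteq> 0" "L \<noteq> 0"
  shows "fact m * fps_nth (((E (L * c) - 1) * Qn L) * Qn (- rd) * ((E (ra * rh) - 1) * Qn ra)) m
    = (\<Sum>j=0..m. \<Sum>i=0..j. real (m choose j) * real (j choose i)
          * (ra powi (int m - int j - 1)) * bphi (m - j) rh
          * ((- rd) powi (int j - int i - 1))
          * (L powi (int i - 1))
          * bernoulli (j - i) * bphi i c)"
proof -
  have nd: "- rd \<noteq> 0" using assms by simp
  have "fact m * fps_nth (((E (L * c) - 1) * Qn L) * Qn (- rd) * ((E (ra * rh) - 1) * Qn ra)) m
     = (\<Sum>j=0..m. real (m choose j) * (fact j * fps_nth (((E (L * c) - 1) * Qn L) * Qn (- rd)) j)
          * (fact (m - j) * fps_nth ((E (ra * rh) - 1) * Qn ra) (m - j)))"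
    by (rule conv)
  also have "\<dots> = (\<Sum>j=0..m. \<Sum>i=0..j. real (m choose j) * real (j choose i)
          * (ra powi (int m - int j - 1)) * bphi (m - j) rh
          * ((- rd) powi (int j - int i - 1))
          * (L powi (int i - 1))
          * bernoulli (j - i) * bphi i c)"
  proof (rule sum.cong)
    fix j assume j: "j \<in> {0..m}"
    have ii: "int m - int j - 1 = int (m - j) - 1" using j by auto
    have inner: "fact j * fps_nth (((E (L * c) - 1) * Qn L) * Qn (- rd)) j
       = (\<Sum>i=0..j. real (j choose i) * (L powi (int i - 1) * bphi i c)
            * ((- rd) powi (int j - int i - 1) * bernoulli (j - i)))"
    proof -
      have "fact j * fps_nth (((E (L * c) - 1) * Qn L) * Qn (- rd)) j
        = (\<Sum>i=0..j. real (j choose i) * (fact i * fps_nth ((E (L * c) - 1) * Qn L) i) * (fact (j - i) * fps_nth (Qn (- rd)) (j - i)))"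
        by (rule conv)
      also have "\<dots> = (\<Sum>i=0..j. real (j choose i) * (L powi (int i - 1) * bphi i c)
            * ((- rd) powi (int j - int i - 1) * bernoulli (j - i)))"
      proof (rule sum.cong)
        fix i assume i: "i \<in> {0..j}"
        have ii2: "int j - int i - 1 = int (j - i) - 1" using i by auto
        show "real (j choose i) * (fact i * fps_nth ((E (L * c) - 1) * Qn L) i) * (fact (j - i) * fps_nth (Qn (- rd)) (j - i))
           = real (j choose i) * (L powi (int i - 1) * bphi i c) * ((- rd) powi (int j - int i - 1) * bernoulli (j - i))"
          unfolding Fphi[OF assms(3)] FB[OF nd] ii2 by (rule refl)
      qed simp
      finally show ?thesis .
    qed
    show "real (m choose j) * (fact j * fps_nth (((E (L * c) - 1) * Qn L) * Qn (- rd)) j)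
          * (fact (m - j) * fps_nth ((E (ra * rh) - 1) * Qn ra) (m - j))
        = (\<Sum>i=0..j. real (m choose j) * real (j choose i)
          * (ra powi (int m - int j - 1)) * bphi (m - j) rh
          * ((- rd) powi (int j - int i - 1))
          * (L powi (int i - 1))
          * bernoulli (j - i) * bphi i c)"
      unfolding inner Fphi[OF assms(1)] ii sum_distrib_left sum_distrib_right
      by (rule sum.cong) (simp_all add: ac_simps)
  qed simp
  finally show ?thesis .
qed

theorem mainTheorem8:
  fixes a d h s m :: nat
  assumes "a \<ge> 2" "d \<ge> 1" "h \<ge> 1" "gcd a d = 1" "1 \<le> s" "s < a" "m \<ge> 3"
  defines "c \<equiv> real_of_int \<lceil>real (a - 1) / real s\<rceil>"
  shows "real m * (real m - 1) * (real m - 2) * Spow a d h s (m - 3) =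
      real m * (\<Sum>j=0..m-1. real (m - 1 choose j) * (real d powi (int m - int j - 2))
          * bernoulli (m - j - 1) * (real a powi (int j - 1))
          * bphi j (real h * c + real d))
    + (\<Sum>j=0..m. \<Sum>i=0..j. real (m choose j) * real (j choose i)
          * (real a powi (int m - int j - 1)) * bphi (m - j) (real h)
          * ((- real d) powi (int j - int i - 1))
          * ((real h * real a + real s * real d) powi (int i - 1))
          * bernoulli (j - i) * bphi i c)
    - real m * (real m - 1) * bernoulli (m - 2)"
proof -
  define cn where "cn = (a - 1 + s - 1) div s"
  have cc: "c = real cn" unfolding c_def cn_def using ceil_div[OF assms(5), of "a - 1"] by simp
  define L where "L = real h * real a + real s * real d"
  have Lpos: "L \<noteq> 0"
  proof -
    have "real h * real a > 0" using assms by simp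
    moreover have "real s * real d \<ge> 0" by simp
    ultimately show ?thesis unfolding L_def by linarith
  qed
  have ra: "real a \<noteq> 0" and rd: "real d \<noteq> 0" using assms by auto
  have m1: "m \<ge> 1" and m2: "m \<ge> 2" using assms by simp_all
  have cop: "coprime a d" using assms(4) by (simp add: coprime_iff_gcd_eq_1)
  note main = fps_main[OF assms(1-3) cop assms(5,6)]
  have "fact m * fps_nth (fps_X^3 * (\<Sum>n\<in>NR a d h s. E (real n))) m
     = fact m * fps_nth (fps_X * (((E (real a * (real h * real cn + real d)) - 1) * Qn (real a)) * Qn (real d))) m
     + fact m * fps_nth ((((E (L * real cn) - 1) * Qn L) * Qn (- real d)) * ((E (real a * real h) - 1) * Qn (real a))) m
     - fact m * fps_nth (fps_X^2 * iG) m"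
    unfolding main cn_def L_def by (simp add: algebra_simps)
  thus ?thesis
    unfolding c_lhs[OF assms(7)] c_t1[OF m1 ra rd] c_t2[OF ra rd Lpos] c_t3[OF m2] cc L_def[symmetric]
    using assms(7) by simp
qed

end
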